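(* Let $G=(V,E)$ be a connected (finite, simple) graph. If there is a set $D\subseteq V$ such that $G[D]$ is connected and every vertex in $V\setminus D$ has at least two neighbors in $D$, then $\mathrm{rc}(G) \le |D|+1$.
   Context: For an edge-coloring of a graph $G$, a path is rainbow if no two of its edges have the same color; $G$ is rainbow-connected if every pair of vertices is joined by a rainbow path. The rainbow connection number $\mathrm{rc}(G)$ is the minimum number of colors in an edge-coloring making $G$ rainbow-connected. $G[D]$ denotes the subgraph induced by $D$. *)

theory Defs
  imports Main
begin

definition simple_graph :: "'a set \<Rightarrow> 'a set set \<Rightarrow> bool" where
  "simple_graph V E \<longleftrightarrow> finite V \<and> (\<forall>e\<in>E. e \<subseteq> V \<and> card e = 2)"

fun path_edges :: "'a list \<Rightarrow> 'a set list" where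
  "path_edges (x # y # xs) = {x, y} # path_edges (y # xs)"
| "path_edges _ = []"

definition is_path :: "'a set \<Rightarrow> 'a set set \<Rightarrow> 'a list \<Rightarrow> 'a \<Rightarrow> 'a \<Rightarrow> bool" where
  "is_path V E p u v \<longleftrightarrow> p \<noteq> [] \<and> hd p = u \<and> last p = v \<and> distinct p
     \<and> set p \<subseteq> V \<and> set (path_edges p) \<subseteq> E"

definition connected_graph :: "'a set \<Rightarrow> 'a set set \<Rightarrow> bool" where
  "connected_graph V E \<longleftrightarrow> V \<noteq> {} \<and> (\<forall>u\<in>V. \<forall>v\<in>V. \<exists>p. is_path V E p u v)"

definition induced_edges :: "'a set set \<Rightarrow> 'a set \<Rightarrow> 'a set set" where
  "induced_edges E D = {e \<in> E. e \<subseteq> D}"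

definition neighbors :: "'a set set \<Rightarrow> 'a \<Rightarrow> 'a set" where
  "neighbors E v = {u. {v, u} \<in> E}"

definition rainbow :: "('a set \<Rightarrow> 'c) \<Rightarrow> 'a list \<Rightarrow> bool" where
  "rainbow c p \<longleftrightarrow> distinct (map c (path_edges p))"

definition rainbow_connected :: "'a set \<Rightarrow> 'a set set \<Rightarrow> ('a set \<Rightarrow> 'c) \<Rightarrow> bool" where
  "rainbow_connected V E c \<longleftrightarrow>
     (\<forall>u\<in>V. \<forall>v\<in>V. \<exists>p. is_path V E p u v \<and> rainbow c p)"

definition rc :: "'a set \<Rightarrow> 'a set set \<Rightarrow> nat" where
  "rc V E = (LEAST k. \<exists>c :: 'a set \<Rightarrow> nat. (\<forall>e\<in>E. c e < k) \<and> rainbow_connected V E c)"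

end

theory Submission
  imports Defs
begin

lemma path_edges_snoc: "p \<noteq> [] \<Longrightarrow> path_edges (p @ [v]) = path_edges p @ [{last p, v}]"
  by (induction p rule: path_edges.induct) auto

lemma path_edges_cons: "p \<noteq> [] \<Longrightarrow> path_edges (u # p) = {u, hd p} # path_edges p"
  by (cases p) auto

lemma path_edges_sub: "set p \<subseteq> T \<Longrightarrow> e \<in> set (path_edges p) \<Longrightarrow> e \<subseteq> T"
  by (induction p rule: path_edges.induct) auto

lemma path_edges_rev: "path_edges (rev p) = rev (path_edges p)"
proof (induction p)
  case (Cons x p)
  show ?case
  proof (cases "p = []")
    case False
    have "path_edges (rev (x # p)) = path_edges (rev p @ [x])" by simp
    also have "\<dots> = path_edges (rev p) @ [{last (rev p), x}]"
      using False by (simp add: path_edges_snoc)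
    also have "\<dots> = rev (path_edges (x # p))"
      using False Cons.IH by (simp add: path_edges_cons last_rev insert_commute)
    finally show ?thesis .
  qed simp
qed simp

lemma is_path_rev: "is_path T E p x y \<Longrightarrow> is_path T E (rev p) y x"
  unfolding is_path_def by (simp add: path_edges_rev hd_rev last_rev)

lemma rainbow_rev: "rainbow c (rev p) = rainbow c p"
  unfolding rainbow_def by (simp add: path_edges_rev rev_map[symmetric])

lemma is_path_mono: "is_path T E p x y \<Longrightarrow> T \<subseteq> V \<Longrightarrow> is_path V E p x y"
  unfolding is_path_def by auto

lemma is_path_cons: "is_path T E p x y \<Longrightarrow> u \<notin> set p \<Longrightarrow> u \<in> T \<Longrightarrow> {u,x} \<in> E
   \<Longrightarrow> is_path T E (u#p) u y"
  unfolding is_path_def using path_edges_cons[of p u] by auto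

lemma is_path_snoc: "is_path T E p x y \<Longrightarrow> v \<notin> set p \<Longrightarrow> v \<in> T \<Longrightarrow> {y,v} \<in> E
   \<Longrightarrow> is_path T E (p@[v]) x v"
  unfolding is_path_def using path_edges_snoc[of p v] by auto

lemma crossing: "p \<noteq> [] \<Longrightarrow> hd p \<in> T \<Longrightarrow> last p \<notin> T \<Longrightarrow>
   \<exists>a b. {a,b} \<in> set (path_edges p) \<and> a \<in> T \<and> b \<notin> T \<and> b \<in> set p"
proof (induction p rule: path_edges.induct)
  case (1 x y xs)
  show ?case
  proof (cases "y \<in> T")
    case True
    with 1 obtain a b where "{a,b} \<in> set (path_edges (y#xs)) \<and> a \<in> T \<and> b \<notin> T \<and> b \<in> set (y#xs)"
      by auto
    then show ?thesis by auto
  next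
    case False
    with 1 show ?thesis by auto
  qed
qed auto

lemma grow:
  assumes conn: "connected_graph D (induced_edges E D)" and fin: "finite D"
  shows "1 \<le> k \<Longrightarrow> k \<le> card D \<Longrightarrow> \<exists>T (c::'a set \<Rightarrow> nat). T \<subseteq> D \<and> card T = k \<and> (\<forall>e. c e \<le> card T) \<and>
     (\<forall>x\<in>T. \<forall>y\<in>T. \<exists>p. is_path T E p x y \<and> rainbow c p \<and> (\<forall>e\<in>set (path_edges p). 2 \<le> c e \<and> c e \<le> card T))"
proof (induction k)
  case 0
  then show ?case by simp
next
  case (Suc k)
  show ?case
  proof (cases "k = 0")
    case True
    from conn obtain r where r: "r \<in> D" unfolding connected_graph_def by auto
    have "is_path {r} E [r] r r" unfolding is_path_def by auto
    moreover have "rainbow (\<lambda>_. 0::nat) [r]" unfolding rainbow_def by simp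
    ultimately show ?thesis using r True
      by (intro exI[of _ "{r}"] exI[of _ "\<lambda>_. 0::nat"]) auto
  next
    case False
    with Suc obtain T and c :: "'a set \<Rightarrow> nat" where T: "T \<subseteq> D" "card T = k" "\<forall>e. c e \<le> card T"
      and P: "\<forall>x\<in>T. \<forall>y\<in>T. \<exists>p. is_path T E p x y \<and> rainbow c p \<and> (\<forall>e\<in>set (path_edges p). 2 \<le> c e \<and> c e \<le> card T)"
      by auto
    have finT: "finite T" using T(1) fin finite_subset by auto
    have "T \<noteq> D" using T Suc.prems by auto
    then obtain w0 where w0: "w0 \<in> D" "w0 \<notin> T" using T(1) by auto
    have "T \<noteq> {}" using T(2) False by auto
    then obtain t0 where t0: "t0 \<in> T" by auto
    from conn t0 w0 T(1) obtain q where q: "is_path D (induced_edges E D) q t0 w0"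
      unfolding connected_graph_def by blast
    then obtain t w where tw: "{t,w} \<in> set (path_edges q)" "t \<in> T" "w \<notin> T" "w \<in> set q"
      using crossing[of q T] t0 w0 unfolding is_path_def by metis
    have wD: "w \<in> D" using tw q unfolding is_path_def by auto
    have twE: "{t,w} \<in> E" using tw q unfolding is_path_def induced_edges_def by auto
    define c' where "c' = c({t,w} := card T + 1)"
    define T' where "T' = insert w T"
    have cardT': "card T' = Suc k" using T finT tw unfolding T'_def by simp
    have same: "map c' (path_edges p) = map c (path_edges p)" if "set p \<subseteq> T" for p
    proof -
      have "{t,w} \<notin> set (path_edges p)" using path_edges_sub[OF that] tw by blast
      then show ?thesis unfolding c'_def by (auto intro: map_cong)
    qed
    have old: "\<exists>p. is_path T E p x y \<and> set p \<subseteq> T \<and> rainbow c' p \<and> (\<forall>e\<in>set (path_edges p). 2 \<le> c' e \<and> c' e \<le> card T)"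
      if xyT: "x \<in> T" "y \<in> T" for x y
    proof -
      obtain p where p: "is_path T E p x y" "rainbow c p" "\<forall>e\<in>set (path_edges p). 2 \<le> c e \<and> c e \<le> card T"
        using P xyT by blast
      have sp: "set p \<subseteq> T" using p(1) unfolding is_path_def by blast
      have m: "map c' (path_edges p) = map c (path_edges p)" using same[OF sp] .
      have eq: "\<forall>e\<in>set (path_edges p). c' e = c e" using m by (simp add: map_eq_conv)
      have r: "rainbow c' p" using p(2) unfolding rainbow_def m .
      have b: "\<forall>e\<in>set (path_edges p). 2 \<le> c' e \<and> c' e \<le> card T" using eq p(3) by simp
      have "is_path T E p x y \<and> set p \<subseteq> T \<and> rainbow c' p \<and> (\<forall>e\<in>set (path_edges p). 2 \<le> c' e \<and> c' e \<le> card T)"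
        using p(1) sp r b by (intro conjI)
      then show ?thesis by (rule exI)
    qed
    have cT1: "card T \<ge> 1" using T(2) False by simp
    have c'tw: "c' {t,w} = card T + 1" unfolding c'_def by simp
    have new: "\<exists>p. is_path T' E p w y \<and> rainbow c' p \<and> (\<forall>e\<in>set (path_edges p). 2 \<le> c' e \<and> c' e \<le> card T')"
      if yT: "y \<in> T" for y
    proof -
      obtain p where p: "is_path T E p t y" "set p \<subseteq> T" "rainbow c' p" "\<forall>e\<in>set (path_edges p). 2 \<le> c' e \<and> c' e \<le> card T"
        using old[OF tw(2) yT] by blast
      have p': "is_path T' E p t y" using is_path_mono[OF p(1)] T'_def by blast
      have pne: "p \<noteq> []" "hd p = t" using p(1) unfolding is_path_def by auto
      have "is_path T' E (w#p) w y"
        by (rule is_path_cons[OF p']) (use p(2) tw(3) twE T'_def in \<open>auto simp: insert_commute\<close>)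
      moreover have "rainbow c' (w#p)"
        using p(3) p(4) c'tw pne unfolding rainbow_def
        by (auto simp: path_edges_cons insert_commute)
      moreover have "\<forall>e\<in>set (path_edges (w#p)). 2 \<le> c' e \<and> c' e \<le> card T'"
        using p(4) c'tw pne cardT' T(2) cT1 by (auto simp: path_edges_cons insert_commute)
      ultimately show ?thesis by blast
    qed
    have all: "\<exists>p. is_path T' E p x y \<and> rainbow c' p \<and> (\<forall>e\<in>set (path_edges p). 2 \<le> c' e \<and> c' e \<le> card T')"
      if xy: "x \<in> T'" "y \<in> T'" for x y
    proof -
      consider "x \<in> T" "y \<in> T" | "x = w" "y \<in> T" | "x \<in> T" "y = w" | "x = w" "y = w"
        using xy T'_def by blast
      then show ?thesis
      proof cases
        case 1
        then obtain p where p: "is_path T E p x y" "rainbow c' p" "\<forall>e\<in>set (path_edges p). 2 \<le> c' e \<and> c' e \<le> card T"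
          using old by blast
        have "is_path T' E p x y" using is_path_mono[OF p(1)] T'_def by blast
        moreover have "card T \<le> card T'" using cardT' T(2) by simp
        ultimately show ?thesis using p(2,3) by (meson order_trans)
      next
        case 2
        then show ?thesis using new by blast
      next
        case 3
        then obtain p where p: "is_path T' E p w x" "rainbow c' p" "\<forall>e\<in>set (path_edges p). 2 \<le> c' e \<and> c' e \<le> card T'"
          using new by blast
        have "is_path T' E (rev p) x w" using is_path_rev[OF p(1)] .
        moreover have "rainbow c' (rev p)" using p(2) rainbow_rev by blast
        moreover have "\<forall>e\<in>set (path_edges (rev p)). 2 \<le> c' e \<and> c' e \<le> card T'" using p(3) by (simp add: path_edges_rev)
        ultimately show ?thesis using 3 by blast
      next
        case 4
        have "is_path T' E [w] w w" unfolding is_path_def T'_def by simp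
        moreover have "rainbow c' [w]" unfolding rainbow_def by simp
        ultimately show ?thesis using 4 by fastforce
      qed
    qed
    have "\<forall>e. c' e \<le> card T'" using T(3) cardT' T(2) unfolding c'_def by (simp add: le_Suc_eq)
    moreover have "T' \<subseteq> D" using T(1) wD T'_def by blast
    ultimately show ?thesis using all cardT' by blast
  qed
qed

lemma two_elems: assumes "card A \<ge> 2" shows "\<exists>x y. x \<in> A \<and> y \<in> A \<and> x \<noteq> y"
proof (rule ccontr)
  assume "\<not> ?thesis"
  then have "\<forall>x\<in>A. \<forall>y\<in>A. x = y" by blast
  moreover have "finite A" using assms by (metis card.infinite not_numeral_le_zero)
  ultimately have "card A \<le> 1" using card_le_Suc0_iff_eq by (metis One_nat_def)
  then show False using assms by simp
qed

theorem lemma1: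
  fixes V :: "'a set" and E :: "'a set set" and D :: "'a set"
  assumes "simple_graph V E"
    and "connected_graph V E"
    and "D \<subseteq> V"
    and "connected_graph D (induced_edges E D)"
    and "\<forall>v \<in> V - D. card (neighbors E v \<inter> D) \<ge> 2"
  shows "rc V E \<le> card D + 1"
proof -
  have finV: "finite V" using assms(1) unfolding simple_graph_def by blast
  have finD: "finite D" using finV assms(3) finite_subset by blast
  have "D \<noteq> {}" using assms(4) unfolding connected_graph_def by blast
  then have cD: "1 \<le> card D" using finD by (simp add: Suc_le_eq card_gt_0_iff)
  obtain T and c :: "'a set \<Rightarrow> nat" where T: "T \<subseteq> D" "card T = card D" "\<forall>e. c e \<le> card T"
    and P: "\<forall>x\<in>T. \<forall>y\<in>T. \<exists>p. is_path T E p x y \<and> rainbow c p \<and> (\<forall>e\<in>set (path_edges p). 2 \<le> c e \<and> c e \<le> card T)"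
    using grow[OF assms(4) finD cD order.refl] by blast
  have TD: "T = D" using T(1,2) finD card_subset_eq by blast
  have "\<forall>v\<in>V-D. \<exists>q. fst q \<noteq> snd q \<and> fst q \<in> neighbors E v \<inter> D \<and> snd q \<in> neighbors E v \<inter> D"
  proof
    fix v assume "v \<in> V - D"
    then have "card (neighbors E v \<inter> D) \<ge> 2" using assms(5) by blast
    from two_elems[OF this] obtain x y where "x \<in> neighbors E v \<inter> D" "y \<in> neighbors E v \<inter> D" "x \<noteq> y"
      by blast
    then show "\<exists>q. fst q \<noteq> snd q \<and> fst q \<in> neighbors E v \<inter> D \<and> snd q \<in> neighbors E v \<inter> D"
      by (intro exI[of _ "(x,y)"]) simp
  qed
  then obtain f where f: "\<forall>v\<in>V-D. fst (f v) \<noteq> snd (f v) \<and> fst (f v) \<in> neighbors E v \<inter> D \<and> snd (f v) \<in> neighbors E v \<inter> D"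
    by (rule bchoice[THEN exE]) blast
  define A where "A v = fst (f v)" for v
  define B where "B v = snd (f v)" for v
  have AB: "A v \<noteq> B v" "A v \<in> D" "B v \<in> D" "{v, A v} \<in> E" "{v, B v} \<in> E" if "v \<in> V - D" for v
    using f that unfolding A_def B_def neighbors_def by auto
  define c' where "c' e = (if \<exists>v\<in>V-D. e = {v, A v} then 0 else if \<exists>v\<in>V-D. e = {v, B v} then 1 else c e)" for e
  have F1: "c' e = c e" if "e \<subseteq> D" for e
    using that unfolding c'_def by auto
  have F2: "c' {v, A v} = 0" if "v \<in> V - D" for v
    using that unfolding c'_def by auto
  have F3: "c' {v, B v} = 1" if vV: "v \<in> V - D" for v
  proof -
    have "\<not> (\<exists>v'\<in>V-D. {v, B v} = {v', A v'})"
    proof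
      assume "\<exists>v'\<in>V-D. {v, B v} = {v', A v'}"
      then obtain v' where v': "v' \<in> V - D" "{v, B v} = {v', A v'}" by blast
      have "v \<noteq> A v'" using AB(2)[OF v'(1)] vV by blast
      then have "v = v'" using v'(2) by (metis doubleton_eq_iff)
      then show False using v'(2) AB[OF vV] vV by (metis doubleton_eq_iff)
    qed
    then show ?thesis unfolding c'_def using vV by auto
  qed
  have F4: "\<forall>e\<in>E. c' e < card D + 1"
    using T(3) TD cD unfolding c'_def by (simp add: less_Suc_eq_le)
  have PD: "\<exists>p. is_path V E p x y \<and> set p \<subseteq> D \<and> rainbow c' p \<and> (\<forall>e\<in>set (path_edges p). 2 \<le> c' e)"
    if xyD: "x \<in> D" "y \<in> D" for x y
  proof -
    obtain p where p: "is_path D E p x y" "rainbow c p" "\<forall>e\<in>set (path_edges p). 2 \<le> c e \<and> c e \<le> card T"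
      using P xyD TD by blast
    have sp: "set p \<subseteq> D" using p(1) unfolding is_path_def by blast
    have eq: "\<forall>e\<in>set (path_edges p). c' e = c e" using F1 path_edges_sub[OF sp] by blast
    then have m: "map c' (path_edges p) = map c (path_edges p)" by simp
    have r: "rainbow c' p" using p(2) unfolding rainbow_def m .
    have b: "\<forall>e\<in>set (path_edges p). 2 \<le> c' e" using eq p(3) by simp
    have "is_path V E p x y" using is_path_mono[OF p(1) assms(3)] .
    then have "is_path V E p x y \<and> set p \<subseteq> D \<and> rainbow c' p \<and> (\<forall>e\<in>set (path_edges p). 2 \<le> c' e)"
      using sp r b by (intro conjI)
    then show ?thesis by (rule exI)
  qed
  have PL: "\<exists>p. is_path V E p u y \<and> set p \<subseteq> insert u D \<and> rainbow c' p \<and> (\<forall>e\<in>set (path_edges p). 1 \<noteq> c' e)"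
    if uy: "u \<in> V - D" "y \<in> D" for u y
  proof -
    obtain p where p: "is_path V E p (A u) y" "set p \<subseteq> D" "rainbow c' p" "\<forall>e\<in>set (path_edges p). 2 \<le> c' e"
      using PD[OF AB(2)[OF uy(1)] uy(2)] by blast
    have pne: "p \<noteq> []" "hd p = A u" using p(1) unfolding is_path_def by auto
    have "is_path V E (u#p) u y"
      by (rule is_path_cons[OF p(1)]) (use p(2) uy AB[OF uy(1)] in auto)
    moreover have "rainbow c' (u#p)"
      using p(3) p(4) F2[OF uy(1)] pne unfolding rainbow_def
      by (auto simp: path_edges_cons)
    moreover have "\<forall>e\<in>set (path_edges (u#p)). 1 \<noteq> c' e"
      using p(4) F2[OF uy(1)] pne by (auto simp: path_edges_cons)
    moreover have "set (u#p) \<subseteq> insert u D" using p(2) by auto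
    ultimately show ?thesis by blast
  qed
  have RC: "rainbow_connected V E c'"
    unfolding rainbow_connected_def
  proof (intro ballI)
    fix u v assume uv: "u \<in> V" "v \<in> V"
    show "\<exists>p. is_path V E p u v \<and> rainbow c' p"
    proof (cases "u = v")
      case True
      have "is_path V E [u] u v" using uv True unfolding is_path_def by simp
      moreover have "rainbow c' [u]" unfolding rainbow_def by simp
      ultimately show ?thesis by blast
    next
      case False
      consider "u \<in> D" "v \<in> D" | "u \<notin> D" "v \<in> D" | "v \<notin> D"
        by blast
      then show ?thesis
      proof cases
        case 1
        then show ?thesis using PD by blast
      next
        case 2
        then show ?thesis using PL[of u v] uv by blast
      next
        case 3
        then have vV: "v \<in> V - D" using uv by blast
        have uA: "u \<in> V" using uv by blast
        obtain p where p: "is_path V E p u (B v)" "rainbow c' p" "set p \<subseteq> insert u D" "\<forall>e\<in>set (path_edges p). 1 \<noteq> c' e"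
        proof (cases "u \<in> D")
          case True
          then obtain p where "is_path V E p u (B v)" "set p \<subseteq> D" "rainbow c' p" "\<forall>e\<in>set (path_edges p). 2 \<le> c' e"
            using PD[OF True AB(3)[OF vV]] by blast
          then show ?thesis using that by fastforce
        next
          case False
          then show ?thesis using that PL[of u "B v"] AB(3)[OF vV] uA by blast
        qed
        have pne: "p \<noteq> []" "last p = B v" using p(1) unfolding is_path_def by auto
        have vp: "v \<notin> set p" using p(3) vV False by blast
        have "is_path V E (p @ [v]) u v"
          by (rule is_path_snoc[OF p(1) vp]) (use vV AB[OF vV] in \<open>auto simp: insert_commute\<close>)
        moreover have "rainbow c' (p @ [v])"
          using p(2) p(4) F3[OF vV] pne unfolding rainbow_def
          by (auto simp: path_edges_snoc insert_commute)
        ultimately show ?thesis by blast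
      qed
    qed
  qed
  show ?thesis unfolding rc_def
    by (rule Least_le) (use F4 RC in blast)
qed

end
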